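(* For all $t,t',s\in\Lambda^\infty$: if $t\to^\infty_{\beta\bot}t'$ and $t'\to^\infty_N s$, then $t\to^\infty_N s$.
   Context: Fix an infinite set $V$ of variables and a set $C$ of constants with $V\cap C=\emptyset$, containing a distinguished constant $\bot$. $\Lambda^\infty$ is the set of infinitary lambda-terms: all finite and infinite terms generated coinductively by $t ::= c\mid x\mid t\,t\mid\lambda x.t$, identified up to $\alpha$-equivalence; $s[t/x]$ is capture-avoiding substitution; $\equiv$ is identity; an atom is a variable or constant. For $R\subseteq\Lambda^\infty\times\Lambda^\infty$, the compatible closure $\to_R$ is the least relation with $(s,t)\in R\Rightarrow s\to_R t$ and $s\to_R s'\Rightarrow st\to_R s't,\ ts\to_R ts',\ \lambda x.s\to_R\lambda x.s'$. $\to_\beta$ is the compatible closure of $R_\beta=\{((\lambda x.s)t,s[t/x])\}$, $\to^*_\beta$ its reflexive-transitive closure. A term is in head normal form (hnf) if it is $\lambda x_1\ldots x_m.\,a\,t_1\ldots t_n$ ($m,n\ge0$, $a$ an atom, $a\not\equiv\bot$); $t$ has a hnf if $t\to^*_\beta t'$ for some $t'$ in hnf. $R_\bot=\{(t,\bot)\mid t\text{ has no hnf}, t\not\equiv\bot\}$; $\to_{\beta\bot}$ is the compatible closure of $R_\beta\cup R_\bot$. The infinitary closure $\to^\infty_{\beta\bot}$ is the greatest relation such that whenever $s\to^\infty_{\beta\bot}u$ (with $\to^*$ the reflexive-transitive closure of $\to_{\beta\bot}$): $u\equiv a$ atom and $s\to^*a$; or $u\equiv u_1'u_2'$, $s\to^*u_1u_2$,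 $u_i\to^\infty_{\beta\bot}u_i'$; or $u\equiv\lambda x.r'$, $s\to^*\lambda x.r$, $r\to^\infty_{\beta\bot}r'$. Weak head contraction $\to_w$ is the least relation with $(\lambda x.s)t\to_w s[t/x]$ and $s\to_w s'\Rightarrow st\to_w s't$; head contraction $\to_h$ is the least relation with $s\to_w s'\Rightarrow s\to_h s'$ and $s\to_h s'\Rightarrow\lambda x.s\to_h\lambda x.s'$; $\to^*_h$ is its reflexive-transitive closure. The relation $\to^\infty_N$ is the greatest relation such that whenever $t\to^\infty_N u$, either (i) $u\equiv\bot$ and $t$ has no hnf, or (ii) $u\equiv\lambda x_1\ldots x_n.\,a\,t_1'\ldots t_m'$ with $a$ an atom, $a\not\equiv\bot$, and there are $t_1,\ldots,t_m$ with $t\to^*_h\lambda x_1\ldots x_n.\,a\,t_1\ldots t_m$ and $t_i\to^\infty_N t_i'$ for $i=1,\ldots,m$. *)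

theory Defs
  imports "HOL-Library.BNF_Corec"
begin

text \<open>Infinitary lambda-terms up to alpha-equivalence, in de Bruijn representation.\<close>

codatatype 'c trm =
    Var nat
  | Const 'c
  | Bot
  | App "'c trm" "'c trm"
  | Lam "'c trm"

definition is_atom :: "'c trm \<Rightarrow> bool" where
  "is_atom t \<longleftrightarrow> (\<exists>n. t = Var n) \<or> (\<exists>c. t = Const c) \<or> t = Bot"

primcorec lift :: "nat \<Rightarrow> 'c trm \<Rightarrow> 'c trm" where
  "lift k t = (case t of
      Var n \<Rightarrow> Var (if n < k then n else Suc n)
    | Const c \<Rightarrow> Const c
    | Bot \<Rightarrow> Bot
    | App a b \<Rightarrow> App (lift k a) (lift k b)
    | Lam a \<Rightarrow> Lam (lift (Suc k) a))"

corec subst :: "nat \<Rightarrow> 'c trm \<Rightarrow> 'c trm \<Rightarrow> 'c trm" where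
  "subst k s t = (case t of
      Var n \<Rightarrow> (if n < k then Var n else if n = k then (lift 0 ^^ k) s else Var (n - 1))
    | Const c \<Rightarrow> Const c
    | Bot \<Rightarrow> Bot
    | App a b \<Rightarrow> App (subst k s a) (subst k s b)
    | Lam a \<Rightarrow> Lam (subst (Suc k) s a))"

inductive beta :: "'c trm \<Rightarrow> 'c trm \<Rightarrow> bool" where
  beta_redex: "beta (App (Lam s) t) (subst 0 t s)"
| beta_app1: "beta s s' \<Longrightarrow> beta (App s t) (App s' t)"
| beta_app2: "beta s s' \<Longrightarrow> beta (App t s) (App t s')"
| beta_lam: "beta s s' \<Longrightarrow> beta (Lam s) (Lam s')"

inductive hnf_body :: "'c trm \<Rightarrow> bool" where
  "is_atom a \<Longrightarrow> a \<noteq> Bot \<Longrightarrow> hnf_body a"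
| "hnf_body s \<Longrightarrow> hnf_body (App s u)"

inductive hnf :: "'c trm \<Rightarrow> bool" where
  "hnf_body t \<Longrightarrow> hnf t"
| "hnf t \<Longrightarrow> hnf (Lam t)"

definition has_hnf :: "'c trm \<Rightarrow> bool" where
  "has_hnf t \<longleftrightarrow> (\<exists>t'. beta\<^sup>*\<^sup>* t t' \<and> hnf t')"

inductive bb :: "'c trm \<Rightarrow> 'c trm \<Rightarrow> bool" where
  bb_redex: "bb (App (Lam s) t) (subst 0 t s)"
| bb_bot: "\<not> has_hnf t \<Longrightarrow> t \<noteq> Bot \<Longrightarrow> bb t Bot"
| bb_app1: "bb s s' \<Longrightarrow> bb (App s t) (App s' t)"
| bb_app2: "bb s s' \<Longrightarrow> bb (App t s) (App t s')"
| bb_lam: "bb s s' \<Longrightarrow> bb (Lam s) (Lam s')"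

coinductive inf_bb :: "'c trm \<Rightarrow> 'c trm \<Rightarrow> bool" where
  inf_atom: "is_atom a \<Longrightarrow> bb\<^sup>*\<^sup>* s a \<Longrightarrow> inf_bb s a"
| inf_app: "bb\<^sup>*\<^sup>* s (App u1 u2) \<Longrightarrow> inf_bb u1 u1' \<Longrightarrow> inf_bb u2 u2' \<Longrightarrow> inf_bb s (App u1' u2')"
| inf_lam: "bb\<^sup>*\<^sup>* s (Lam r) \<Longrightarrow> inf_bb r r' \<Longrightarrow> inf_bb s (Lam r')"

inductive whead :: "'c trm \<Rightarrow> 'c trm \<Rightarrow> bool" where
  "whead (App (Lam s) t) (subst 0 t s)"
| "whead s s' \<Longrightarrow> whead (App s t) (App s' t)"

inductive head :: "'c trm \<Rightarrow> 'c trm \<Rightarrow> bool" where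
  "whead s s' \<Longrightarrow> head s s'"
| "head s s' \<Longrightarrow> head (Lam s) (Lam s')"

definition lams :: "nat \<Rightarrow> 'c trm \<Rightarrow> 'c trm" where
  "lams n t = (Lam ^^ n) t"

definition apps :: "'c trm \<Rightarrow> 'c trm list \<Rightarrow> 'c trm" where
  "apps a ts = foldl App a ts"

coinductive infN :: "'c trm \<Rightarrow> 'c trm \<Rightarrow> bool" where
  infN_bot: "\<not> has_hnf t \<Longrightarrow> infN t Bot"
| infN_hnf: "is_atom a \<Longrightarrow> a \<noteq> Bot \<Longrightarrow> length ts = length ts' \<Longrightarrow>
     head\<^sup>*\<^sup>* t (lams n (apps a ts)) \<Longrightarrow>
     (\<forall>i < length ts. infN (ts ! i) (ts' ! i)) \<Longrightarrow>
     infN t (lams n (apps a ts'))"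

end

theory Submission
  imports Defs
begin

lemma lift_simps[simp]:
  "lift k (Var n) = Var (if n < k then n else Suc n)"
  "lift k (Const c) = Const c"
  "lift k Bot = Bot"
  "lift k (App a b) = App (lift k a) (lift k b)"
  "lift k (Lam a) = Lam (lift (Suc k) a)"
  by (subst lift.code; simp)+

lemma subst_simps[simp]:
  "subst k s (Var n) = (if n < k then Var n else if n = k then (lift 0 ^^ k) s else Var (n - 1))"
  "subst k s (Const c) = Const c"
  "subst k s Bot = Bot"
  "subst k s (App a b) = App (subst k s a) (subst k s b)"
  "subst k s (Lam a) = Lam (subst (Suc k) s a)"
  by (subst subst.code; simp)+

lemma lift_lift: "i \<le> k \<Longrightarrow> lift (Suc k) (lift i t) = lift i (lift k t)"
proof (coinduction arbitrary: i k t rule: trm.coinduct_strong)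
  case (Eq_trm i k t)
  then show ?case by (cases t) auto
qed

lemma lift_pow_low: "a \<le> i \<Longrightarrow> lift a ((lift 0 ^^ i) u) = (lift 0 ^^ (Suc i)) u"
proof (induction i arbitrary: a)
  case 0 then show ?case by simp
next
  case (Suc i)
  show ?case
  proof (cases a)
    case 0 then show ?thesis by simp
  next
    case (Suc a')
    then have "a' \<le> i" using Suc.prems by simp
    have "lift a ((lift 0 ^^ Suc i) u) = lift (Suc a') (lift 0 ((lift 0 ^^ i) u))" using Suc by simp
    also have "\<dots> = lift 0 (lift a' ((lift 0 ^^ i) u))" by (rule lift_lift) simp
    also have "\<dots> = lift 0 ((lift 0 ^^ Suc i) u)" using Suc.IH[OF \<open>a' \<le> i\<close>] by simp
    finally show ?thesis by simp
  qed
qed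

lemma lift_pow_comm: "j \<le> i \<Longrightarrow> lift i ((lift 0 ^^ j) s) = (lift 0 ^^ j) (lift (i - j) s)"
proof (induction j arbitrary: i)
  case 0 then show ?case by simp
next
  case (Suc j)
  then obtain i' where i: "i = Suc i'" "j \<le> i'" by (cases i) auto
  have "lift i ((lift 0 ^^ Suc j) s) = lift (Suc i') (lift 0 ((lift 0 ^^ j) s))" using i by simp
  also have "\<dots> = lift 0 (lift i' ((lift 0 ^^ j) s))" by (rule lift_lift) simp
  also have "\<dots> = lift 0 ((lift 0 ^^ j) (lift (i' - j) s))" using Suc.IH[OF i(2)] by simp
  finally show ?case using i by simp
qed

lemma lift_subst_var: "j \<le> i \<Longrightarrow> lift i (subst j s (Var n)) = subst j (lift (i - j) s) (lift (Suc i) (Var n))"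
proof -
  assume a: "j \<le> i"
  consider "n < j" | "n = j" | "j < n" "n \<le> i" | "i < n" by linarith
  then show ?thesis
  proof cases
    case 2 then show ?thesis using a by (simp add: lift_pow_comm)
  qed (use a in auto)
qed

lemma lift_subst: "j \<le> i \<Longrightarrow> lift i (subst j s t) = subst j (lift (i - j) s) (lift (Suc i) t)"
proof (coinduction arbitrary: i j t rule: trm.coinduct_strong)
  case (Eq_trm i j t)
  then show ?case
  proof (cases t)
    case (Var n)
    then show ?thesis using Eq_trm lift_subst_var[of j i s n] by simp
  next
    case (Lam x)
    then show ?thesis using Eq_trm
      by simp (rule disjI1, rule exI[of _ "Suc i"], rule exI[of _ "Suc j"], auto)
  qed auto
qed

lemma subst_lift_comm_var: "a \<le> i \<Longrightarrow> subst (Suc i) u (lift a (Var n)) = lift a (subst i u (Var n))"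
proof -
  assume a: "a \<le> i"
  consider "n < a" | "a \<le> n" "n < i" | "n = i" | "i < n" by linarith
  then show ?thesis
  proof cases
    case 3 then show ?thesis using a lift_pow_low[OF a, of u] by (simp del: funpow.simps)
  qed (use a in auto)
qed

lemma subst_lift_comm: "a \<le> i \<Longrightarrow> subst (Suc i) u (lift a x) = lift a (subst i u x)"
proof (coinduction arbitrary: a i x rule: trm.coinduct_strong)
  case (Eq_trm a i x)
  then show ?case
  proof (cases x)
    case (Var n)
    then show ?thesis using Eq_trm subst_lift_comm_var[of a i u n] by simp
  next
    case (Lam y)
    then show ?thesis using Eq_trm
      by simp (rule disjI1, rule exI[of _ "Suc a"], rule exI[of _ "Suc i"], auto)
  qed auto
qed

lemma subst_lift_id: "subst a t (lift a x) = x"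
proof (coinduction arbitrary: a x rule: trm.coinduct_strong)
  case (Eq_trm a x)
  then show ?case by (cases x) auto
qed

lemma subst_pow: "j \<le> i \<Longrightarrow> subst i u ((lift 0 ^^ j) t) = (lift 0 ^^ j) (subst (i - j) u t)"
proof (induction j arbitrary: i)
  case 0 then show ?case by simp
next
  case (Suc j)
  then obtain i' where i: "i = Suc i'" "j \<le> i'" by (cases i) auto
  have "subst i u ((lift 0 ^^ Suc j) t) = subst (Suc i') u (lift 0 ((lift 0 ^^ j) t))" using i by simp
  also have "\<dots> = lift 0 (subst i' u ((lift 0 ^^ j) t))" by (rule subst_lift_comm) simp
  also have "\<dots> = lift 0 ((lift 0 ^^ j) (subst (i' - j) u t))" using Suc.IH[OF i(2)] by simp
  finally show ?case using i by simp
qed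

lemma subst_pow_vanish: "j \<le> i \<Longrightarrow> subst j t ((lift 0 ^^ Suc i) u) = (lift 0 ^^ i) u"
  using lift_pow_low[of j i u] subst_lift_id[of j t "(lift 0 ^^ i) u"] by simp

lemma subst_subst_var: "j \<le> i \<Longrightarrow> subst i u (subst j t (Var n)) = subst j (subst (i - j) u t) (subst (Suc i) u (Var n))"
proof -
  assume a: "j \<le> i"
  consider "n < j" | "n = j" | "j < n" "n \<le> i" | "n = Suc i" | "Suc i < n" by linarith
  then show ?thesis
  proof cases
    case 2 then show ?thesis using a by (simp add: subst_pow)
  next
    case 4 then show ?thesis using a subst_pow_vanish[OF a, of "subst (i - j) u t" u] by (simp del: funpow.simps)
  qed (use a in auto)
qed

lemma subst_subst: "j \<le> i \<Longrightarrow> subst i u (subst j t s) = subst j (subst (i - j) u t) (subst (Suc i) u s)"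
proof (coinduction arbitrary: i j s rule: trm.coinduct_strong)
  case (Eq_trm i j s)
  then show ?case
  proof (cases s)
    case (Var n)
    then show ?thesis using Eq_trm subst_subst_var[of j i u t n] by simp
  next
    case (Lam y)
    then show ?thesis using Eq_trm
      by simp (rule disjI1, rule exI[of _ "Suc i"], rule exI[of _ "Suc j"], auto)
  qed auto
qed

section \<open>Closure properties of weak head / head reduction\<close>

lemma whead_lift: "whead a b \<Longrightarrow> whead (lift k a) (lift k b)"
proof (induction arbitrary: k rule: whead.induct)
  case (1 s t)
  have "lift k (subst 0 t s) = subst 0 (lift k t) (lift (Suc k) s)"
    using lift_subst[of 0 k t s] by simp
  then show ?case by (simp add: whead.intros)
qed (simp add: whead.intros)

lemma whead_subst: "whead a b \<Longrightarrow> whead (subst k u a) (subst k u b)"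
proof (induction arbitrary: k rule: whead.induct)
  case (1 s t)
  have "subst k u (subst 0 t s) = subst 0 (subst k u t) (subst (Suc k) u s)"
    using subst_subst[of 0 k u t s] by simp
  then show ?case by (simp add: whead.intros)
qed (simp add: whead.intros)

lemma whead_star_lift: "whead\<^sup>*\<^sup>* a b \<Longrightarrow> whead\<^sup>*\<^sup>* (lift k a) (lift k b)"
  by (induction rule: rtranclp_induct) (auto intro: rtranclp.rtrancl_into_rtrancl whead_lift)

lemma whead_star_subst: "whead\<^sup>*\<^sup>* a b \<Longrightarrow> whead\<^sup>*\<^sup>* (subst k u a) (subst k u b)"
  by (induction rule: rtranclp_induct) (auto intro: rtranclp.rtrancl_into_rtrancl whead_subst)

lemma whead_star_app: "whead\<^sup>*\<^sup>* a b \<Longrightarrow> whead\<^sup>*\<^sup>* (App a c) (App b c)"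
  by (induction rule: rtranclp_induct) (auto intro: rtranclp.rtrancl_into_rtrancl whead.intros)

lemma head_star_lam: "head\<^sup>*\<^sup>* a b \<Longrightarrow> head\<^sup>*\<^sup>* (Lam a) (Lam b)"
  by (induction rule: rtranclp_induct) (auto intro: rtranclp.rtrancl_into_rtrancl head.intros)

lemma whead_head: "whead a b \<Longrightarrow> head a b"
  by (rule head.intros)

lemma whead_star_head_star: "whead\<^sup>*\<^sup>* a b \<Longrightarrow> head\<^sup>*\<^sup>* a b"
  by (induction rule: rtranclp_induct) (auto intro: rtranclp.rtrancl_into_rtrancl whead_head)

lemma whead_beta: "whead a b \<Longrightarrow> beta a b"
  by (induction rule: whead.induct) (auto intro: beta.intros)

lemma head_beta: "head a b \<Longrightarrow> beta a b"
  by (induction rule: head.induct) (auto intro: beta.intros whead_beta)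

lemma head_star_beta_star: "head\<^sup>*\<^sup>* a b \<Longrightarrow> beta\<^sup>*\<^sup>* a b"
  by (induction rule: rtranclp_induct) (auto intro: rtranclp.rtrancl_into_rtrancl head_beta)

lemma no_whead_Lam[simp]: "\<not> whead (Lam a) b"
  by (auto elim: whead.cases)

lemma no_whead_atom: "is_atom a \<Longrightarrow> \<not> whead a b"
  by (auto simp: is_atom_def elim: whead.cases)

lemma whead_det: "whead a b \<Longrightarrow> whead a c \<Longrightarrow> b = c"
  proof (induction arbitrary: c rule: whead.induct)
  case 1 from 1 show ?case by (cases rule: whead.cases) auto
next
  case 2 from 2(3) show ?case by (cases rule: whead.cases) (use 2 in auto)
qed

lemma head_Lam_inv: "head (Lam s) c \<Longrightarrow> \<exists>b. c = Lam b \<and> head s b"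
  by (erule head.cases) auto

lemma head_nonLam: "head a c \<Longrightarrow> \<forall>x. a \<noteq> Lam x \<Longrightarrow> whead a c"
  by (erule head.cases) auto

lemma head_det: "head a b \<Longrightarrow> head a c \<Longrightarrow> b = c"
proof (induction arbitrary: c rule: head.induct)
  case (1 s s' c)
  have "\<forall>x. s \<noteq> Lam x" using 1(1) by auto
  then have "whead s c" using 1(2) head_nonLam by blast
  then show ?case using 1(1) whead_det by blast
next
  case (2 s s' c)
  then obtain b where "c = Lam b" "head s b" using head_Lam_inv by blast
  then show ?case using 2 by simp
qed

lemma whead_star_atom: "whead\<^sup>*\<^sup>* a b \<Longrightarrow> is_atom a \<Longrightarrow> b = a"
  by (induction rule: converse_rtranclp_induct) (auto dest: no_whead_atom)

lemma whead_star_Lam0: "whead\<^sup>*\<^sup>* x b \<Longrightarrow> x = Lam a \<Longrightarrow> b = Lam a"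
  by (induction rule: converse_rtranclp_induct) auto

lemma whead_star_Lam: "whead\<^sup>*\<^sup>* (Lam a) b \<Longrightarrow> b = Lam a"
  using whead_star_Lam0 by blast

lemma is_atom_simps[simp]:
  "is_atom (Var n)" "is_atom (Const c)" "is_atom Bot" "\<not> is_atom (App a b)" "\<not> is_atom (Lam a)"
  by (auto simp: is_atom_def)

section \<open>Generic standard infinitary reduction\<close>

coinductive infg :: "('c trm \<Rightarrow> bool) \<Rightarrow> 'c trm \<Rightarrow> 'c trm \<Rightarrow> bool" for P where
  g_bot: "P s \<Longrightarrow> infg P s Bot"
| g_atom: "is_atom a \<Longrightarrow> a \<noteq> Bot \<Longrightarrow> whead\<^sup>*\<^sup>* s a \<Longrightarrow> infg P s a"
| g_app: "whead\<^sup>*\<^sup>* s (App u1 u2) \<Longrightarrow> infg P u1 u1' \<Longrightarrow> infg P u2 u2' \<Longrightarrow> infg P s (App u1' u2')"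
| g_lam: "whead\<^sup>*\<^sup>* s (Lam r) \<Longrightarrow> infg P r r' \<Longrightarrow> infg P s (Lam r')"

definition okP :: "('c trm \<Rightarrow> bool) \<Rightarrow> bool" where
  "okP P \<longleftrightarrow> P Bot \<and> (\<forall>k s. P s \<longrightarrow> P (lift k s)) \<and> (\<forall>k u s. P s \<longrightarrow> P (subst k u s))
     \<and> (\<forall>s s1. whead s s1 \<longrightarrow> P s1 \<longrightarrow> P s)"

lemma okP_star:
  assumes "okP P" "whead\<^sup>*\<^sup>* s s1" "P s1" shows "P s"
  using assms(2,3) by (induction rule: converse_rtranclp_induct) (use assms(1) in \<open>auto simp: okP_def\<close>)

lemma infg_refl: "okP P \<Longrightarrow> infg P t t"
proof (coinduction arbitrary: t rule: infg.coinduct)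
  case (infg t)
  then show ?case
    by (cases t) (auto simp: okP_def)
qed

lemma infg_prepend: "okP P \<Longrightarrow> whead\<^sup>*\<^sup>* s s1 \<Longrightarrow> infg P s1 t \<Longrightarrow> infg P s t"
  by (erule infg.cases) (auto intro: infg.intros okP_star rtranclp_trans)


lemma infg_lift:
  assumes ok: "okP P" and h: "infg P p p'"
  shows "infg P (lift k p) (lift k p')"
  using h
proof (coinduction arbitrary: k p p' rule: infg.coinduct)
  case (infg k p p')
  from infg show ?case
  proof (cases rule: infg.cases)
    case g_bot then show ?thesis using ok by (auto simp: okP_def)
  next
    case g_atom
    then have "is_atom (lift k p')" "lift k p' \<noteq> Bot" by (auto simp: is_atom_def)
    then show ?thesis using g_atom whead_star_lift[of p p' k] by auto
  next
    case (g_app u1 u2 u1' u2')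
    then show ?thesis using whead_star_lift[of p "App u1 u2" k] by simp blast
  next
    case (g_lam r r')
    then show ?thesis using whead_star_lift[of p "Lam r" k] by simp blast
  qed
qed

lemma infg_lift_pow:
  assumes ok: "okP P" and h: "infg P p p'"
  shows "infg P ((lift 0 ^^ n) p) ((lift 0 ^^ n) p')"
  by (induction n) (use assms infg_lift in auto)

lemma infg_unfold_prepend:
  assumes ok: "okP P" and w: "whead\<^sup>*\<^sup>* a x" and h: "infg P x y"
  shows "(\<exists>s. a = s \<and> y = Bot \<and> P s) \<or>
    (\<exists>aa s. a = s \<and> y = aa \<and> is_atom aa \<and> aa \<noteq> Bot \<and> whead\<^sup>*\<^sup>* s aa) \<or>
    (\<exists>s u1 u2 u1' u2'. a = s \<and> y = App u1' u2' \<and> whead\<^sup>*\<^sup>* s (App u1 u2) \<and>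
        (Q u1 u1' \<or> infg P u1 u1') \<and> (Q u2 u2' \<or> infg P u2 u2')) \<or>
    (\<exists>s r r'. a = s \<and> y = Lam r' \<and> whead\<^sup>*\<^sup>* s (Lam r) \<and> (Q r r' \<or> infg P r r'))"
proof -
  have "infg P a y" using infg_prepend[OF ok w h] .
  then show ?thesis by (cases rule: infg.cases) auto
qed

lemma infg_subst:
  assumes ok: "okP P" and h: "infg P p p'" and hq: "infg P q q'"
  shows "infg P (subst k q p) (subst k q' p')"
  using h
proof (coinduction arbitrary: k p p' rule: infg.coinduct)
  case (infg k p p')
  from infg show ?case
  proof (cases rule: infg.cases)
    case g_bot then show ?thesis using ok by (auto simp: okP_def)
  next
    case g_atom
    have w: "whead\<^sup>*\<^sup>* (subst k q p) (subst k q p')" using g_atom whead_star_subst by blast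
    show ?thesis
    proof (cases "\<exists>n. p' = Var n")
      case True
      then obtain n where n: "p' = Var n" by blast
      show ?thesis
      proof (cases "n = k")
        case True
        have "infg P ((lift 0 ^^ k) q) ((lift 0 ^^ k) q')" using infg_lift_pow[OF ok hq] .
        then have "infg P (subst k q p) (subst k q' p')"
          using infg_prepend[OF ok] w n True by simp
        then show ?thesis by (cases rule: infg.cases) auto
      next
        case False
        have "is_atom (subst k q' p')" "subst k q' p' \<noteq> Bot" "subst k q' p' = subst k q p'"
          using n False by auto
        then show ?thesis using w by auto
      qed
    next
      case False
      then obtain c where c: "p' = Const c" using g_atom by (auto simp: is_atom_def)
      then show ?thesis using w by auto
    qed
  next
    case (g_app u1 u2 u1' u2')
    then show ?thesis using whead_star_subst[of p "App u1 u2" k q] by simp blast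
  next
    case (g_lam r r')
    then show ?thesis using whead_star_subst[of p "Lam r" k q] by simp blast
  qed
qed

lemma infg_append:
  assumes ok: "okP P"
  shows "beta t u \<Longrightarrow> infg P s t \<Longrightarrow> infg P s u"
proof (induction arbitrary: s rule: beta.induct)
  case (beta_redex p q)
  from beta_redex show ?case
  proof (cases rule: infg.cases)
    case (g_app u1 u2)
    from g_app(2) obtain r where r: "whead\<^sup>*\<^sup>* u1 (Lam r)" "infg P r p"
      by (cases rule: infg.cases) auto
    have "whead\<^sup>*\<^sup>* s (App (Lam r) u2)"
      using g_app(1) whead_star_app[OF r(1), of u2] by (rule rtranclp_trans)
    then have "whead\<^sup>*\<^sup>* s (subst 0 u2 r)"
      by (rule rtranclp.rtrancl_into_rtrancl) (rule whead.intros)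
    moreover have "infg P (subst 0 u2 r) (subst 0 q p)"
      using infg_subst[OF ok r(2) g_app(3)] .
    ultimately show ?thesis using infg_prepend[OF ok] by blast
  qed simp_all
next
  case (beta_app1 t1 t1' t2)
  from beta_app1(3) show ?case
    by (cases rule: infg.cases) (auto intro: infg.intros beta_app1.IH)
next
  case (beta_app2 t2 t2' t1)
  from beta_app2(3) show ?case
    by (cases rule: infg.cases) (auto intro: infg.intros beta_app2.IH)
next
  case (beta_lam t1 t1')
  from beta_lam(3) show ?case
    by (cases rule: infg.cases) (auto intro: infg.intros beta_lam.IH)
qed

lemma infg_append_star:
  assumes ok: "okP P"
  shows "beta\<^sup>*\<^sup>* t u \<Longrightarrow> infg P s t \<Longrightarrow> infg P s u"
  by (induction rule: rtranclp_induct) (auto intro: infg_append[OF ok])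

lemma beta_star_infg: "okP P \<Longrightarrow> beta\<^sup>*\<^sup>* s t \<Longrightarrow> infg P s t"
  using infg_append_star infg_refl by blast

lemma lams_0[simp]: "lams 0 t = t" by (simp add: lams_def)
lemma lams_Suc[simp]: "lams (Suc n) t = Lam (lams n t)" by (simp add: lams_def)
lemma apps_Nil[simp]: "apps a [] = a" by (simp add: apps_def)
lemma apps_snoc[simp]: "apps a (us @ [u]) = App (apps a us) u" by (simp add: apps_def)

lemma infg_apps:
  assumes ok: "okP P" and a: "is_atom a" "a \<noteq> Bot"
  shows "infg P t (apps a us) \<Longrightarrow> \<exists>ws. whead\<^sup>*\<^sup>* t (apps a ws) \<and> list_all2 (infg P) ws us"
proof (induction us arbitrary: t rule: rev_induct)
  case Nil
  from Nil show ?case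
  proof (cases rule: infg.cases)
    case g_bot then show ?thesis using a by simp
  next
    case g_atom then show ?thesis by (intro exI[of _ "[]"]) simp
  next
    case (g_app u1 u2 u1' u2') then show ?thesis using a by simp
  next
    case (g_lam r r') then show ?thesis using a by simp
  qed
next
  case (snoc u us)
  from snoc.prems have "infg P t (App (apps a us) u)" by simp
  then show ?case
  proof (cases rule: infg.cases)
    case (g_app w1 w2)
    obtain ws where ws: "whead\<^sup>*\<^sup>* w1 (apps a ws)" "list_all2 (infg P) ws us"
      using snoc.IH[OF g_app(2)] by blast
    have "whead\<^sup>*\<^sup>* t (apps a (ws @ [w2]))"
      using g_app(1) whead_star_app[OF ws(1), of w2] by simp
    moreover have "list_all2 (infg P) (ws @ [w2]) (us @ [u])"
      using ws(2) g_app(3) by (simp add: list_all2_appendI)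
    ultimately show ?thesis by blast
  qed simp_all
qed

lemma infg_lams:
  assumes ok: "okP P" and a: "is_atom a" "a \<noteq> Bot"
  shows "infg P t (lams n (apps a us)) \<Longrightarrow> \<exists>ws. head\<^sup>*\<^sup>* t (lams n (apps a ws)) \<and> list_all2 (infg P) ws us"
proof (induction n arbitrary: t)
  case 0
  then show ?case using infg_apps[OF ok a] whead_star_head_star by fastforce
next
  case (Suc n)
  from Suc.prems have "infg P t (Lam (lams n (apps a us)))" by simp
  then show ?case
  proof (cases rule: infg.cases)
    case (g_lam r)
    obtain ws where ws: "head\<^sup>*\<^sup>* r (lams n (apps a ws))" "list_all2 (infg P) ws us"
      using Suc.IH[OF g_lam(2)] by blast
    have "head\<^sup>*\<^sup>* t (Lam r)" using g_lam(1) whead_star_head_star by blast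
    then have "head\<^sup>*\<^sup>* t (lams (Suc n) (apps a ws))"
      using head_star_lam[OF ws(1)] by simp
    then show ?thesis using ws(2) by blast
  qed simp_all
qed

lemma hnf_body_shape: "hnf_body h \<Longrightarrow> \<exists>a us. h = apps a us \<and> is_atom a \<and> a \<noteq> Bot"
proof (induction rule: hnf_body.induct)
  case (1 a) then show ?case by (intro exI[of _ a] exI[of _ "[]"]) simp
next
  case (2 s u)
  then obtain a us where "s = apps a us" "is_atom a" "a \<noteq> Bot" by blast
  then show ?case by (intro exI[of _ a] exI[of _ "us @ [u]"]) simp
qed

lemma hnf_shape: "hnf h \<Longrightarrow> \<exists>n a us. h = lams n (apps a us) \<and> is_atom a \<and> a \<noteq> Bot"
proof (induction rule: hnf.induct)
  case (1 t) then show ?case using hnf_body_shape by (metis lams_0)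
next
  case (2 t)
  then obtain n a us where "t = lams n (apps a us)" "is_atom a" "a \<noteq> Bot" by blast
  then show ?case by (intro exI[of _ "Suc n"] exI[of _ a] exI[of _ us]) simp
qed

lemma hnf_body_apps: "is_atom a \<Longrightarrow> a \<noteq> Bot \<Longrightarrow> hnf_body (apps a ws)"
  by (induction ws rule: rev_induct) (auto intro: hnf_body.intros)

lemma hnf_lams: "is_atom a \<Longrightarrow> a \<noteq> Bot \<Longrightarrow> hnf (lams n (apps a ws))"
  by (induction n) (auto intro: hnf.intros hnf_body_apps)

definition P0 :: "'c trm \<Rightarrow> bool" where "P0 s \<longleftrightarrow> whead\<^sup>*\<^sup>* s Bot"

lemma okP_P0: "okP P0"
  unfolding okP_def P0_def
  using whead_star_lift[of _ Bot] whead_star_subst[of _ Bot] by (auto intro: converse_rtranclp_into_rtranclp)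

lemma HN: "beta\<^sup>*\<^sup>* t h \<Longrightarrow> hnf h \<Longrightarrow> \<exists>h'. head\<^sup>*\<^sup>* t h' \<and> hnf h'"
proof -
  assume b: "beta\<^sup>*\<^sup>* t h" and h: "hnf h"
  obtain n a us where hs: "h = lams n (apps a us)" "is_atom a" "a \<noteq> Bot" using hnf_shape[OF h] by blast
  have "infg P0 t h" using beta_star_infg[OF okP_P0 b] .
  then obtain ws where "head\<^sup>*\<^sup>* t (lams n (apps a ws))"
    using infg_lams[OF okP_P0 hs(2,3)] hs(1) by blast
  then show ?thesis using hnf_lams[OF hs(2,3)] by blast
qed

lemma has_hnf_head: "has_hnf t \<longleftrightarrow> (\<exists>h. head\<^sup>*\<^sup>* t h \<and> hnf h)"
  unfolding has_hnf_def using HN head_star_beta_star by blast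

lemma hnf_body_no_whead: "hnf_body h \<Longrightarrow> \<not> whead h x"
proof (induction arbitrary: x rule: hnf_body.induct)
  case (1 a) then show ?case using no_whead_atom by blast
next
  case (2 s u)
  note IH = "2.IH"
  note hb = 2(1)
  show ?case
  proof
    assume "whead (App s u) x"
    then show False
    proof (cases rule: whead.cases)
      case (1 s0) then show ?thesis using hb by (auto elim: hnf_body.cases)
    next
      case (2 s') then show ?thesis using IH by blast
    qed
  qed
qed

lemma hnf_body_not_Lam: "hnf_body h \<Longrightarrow> h \<noteq> Lam x"
  by (auto elim: hnf_body.cases)

lemma hnf_no_head: "hnf h \<Longrightarrow> \<not> head h x"
proof (induction arbitrary: x rule: hnf.induct)
  case (1 t)
  show ?case
  proof
    assume "head t x"
    then have "whead t x" using head_nonLam hnf_body_not_Lam[OF 1] by blast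
    then show False using hnf_body_no_whead[OF 1] by blast
  qed
next
  case (2 t)
  show ?case using 2 head_Lam_inv by blast
qed

lemma head_star_hnf_unique: "head\<^sup>*\<^sup>* t t1 \<Longrightarrow> head\<^sup>*\<^sup>* t h \<Longrightarrow> hnf h \<Longrightarrow> head\<^sup>*\<^sup>* t1 h"
proof (induction rule: rtranclp_induct)
  case base then show ?case by simp
next
  case (step t0 t1)
  have "head\<^sup>*\<^sup>* t0 h" using step by blast
  then show ?case
  proof (cases rule: converse_rtranclpE)
    case base then show ?thesis using step hnf_no_head by blast
  next
    case (step x) then show ?thesis using \<open>head t0 t1\<close> head_det by blast
  qed
qed

lemma has_hnf_head_fwd: "head t t1 \<Longrightarrow> has_hnf t \<Longrightarrow> has_hnf t1"
  unfolding has_hnf_head using head_star_hnf_unique by blast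

lemma has_hnf_whead_fwd: "whead t t1 \<Longrightarrow> has_hnf t \<Longrightarrow> has_hnf t1"
  using has_hnf_head_fwd whead_head by blast

lemma has_hnf_beta_bwd: "beta t t1 \<Longrightarrow> has_hnf t1 \<Longrightarrow> has_hnf t"
  unfolding has_hnf_def by (meson converse_rtranclp_into_rtranclp)

lemma has_hnf_beta_star_bwd: "beta\<^sup>*\<^sup>* t t1 \<Longrightarrow> has_hnf t1 \<Longrightarrow> has_hnf t"
  unfolding has_hnf_def by (meson rtranclp_trans)

lemma hnf_has_hnf: "hnf t \<Longrightarrow> has_hnf t"
  unfolding has_hnf_def by blast


lemma lift_inv_App: "lift k p = App a b \<Longrightarrow> \<exists>p1 p2. p = App p1 p2 \<and> a = lift k p1 \<and> b = lift k p2"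
  by (cases p) auto

lemma lift_inv_Lam: "lift k p = Lam a \<Longrightarrow> \<exists>p0. p = Lam p0 \<and> a = lift (Suc k) p0"
  by (cases p) auto

lemma whead_lift_refl: "whead x y \<Longrightarrow> x = lift k p \<Longrightarrow> \<exists>p1. whead p p1 \<and> y = lift k p1"
proof (induction arbitrary: p rule: whead.induct)
  case (1 s t)
  obtain p1 p2 where p: "p = App p1 p2" "Lam s = lift k p1" "t = lift k p2"
    using lift_inv_App[OF 1[symmetric]] by blast
  obtain p0 where p0: "p1 = Lam p0" "s = lift (Suc k) p0" using lift_inv_Lam[OF p(2)[symmetric]] by blast
  have "subst 0 t s = lift k (subst 0 p2 p0)" using lift_subst[of 0 k p2 p0] p p0 by simp
  then show ?case using p p0 by (auto intro: whead.intros)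
next
  case (2 s s' t)
  obtain p1 p2 where p: "p = App p1 p2" "s = lift k p1" "t = lift k p2"
    using lift_inv_App[OF "2.prems"[symmetric]] by blast
  obtain q where "whead p1 q" "s' = lift k q" using "2.IH"[OF p(2)] by blast
  then show ?case using p by (auto intro: whead.intros)
qed

lemma head_lift_refl: "head x y \<Longrightarrow> x = lift k p \<Longrightarrow> \<exists>p1. head p p1 \<and> y = lift k p1"
proof (induction arbitrary: k p rule: head.induct)
  case (1 s s')
  then show ?case using whead_lift_refl head.intros(1) by blast
next
  case (2 s s')
  obtain p0 where p0: "p = Lam p0" "s = lift (Suc k) p0" using lift_inv_Lam[OF "2.prems"[symmetric]] by blast
  obtain q where "head p0 q" "s' = lift (Suc k) q" using "2.IH"[OF p0(2)] by blast
  then show ?case using p0 by (auto intro: head.intros)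
qed

lemma hnf_body_lift_refl: "hnf_body x \<Longrightarrow> x = lift k p \<Longrightarrow> hnf_body p"
proof (induction arbitrary: p rule: hnf_body.induct)
  case (1 a)
  then show ?case by (cases p) (auto intro: hnf_body.intros)
next
  case (2 s u)
  obtain p1 p2 where p: "p = App p1 p2" "s = lift k p1" "u = lift k p2"
    using lift_inv_App[OF "2.prems"[symmetric]] by blast
  then show ?case using "2.IH"[OF p(2)] by (auto intro: hnf_body.intros)
qed

lemma hnf_lift_refl: "hnf x \<Longrightarrow> x = lift k p \<Longrightarrow> hnf p"
proof (induction arbitrary: k p rule: hnf.induct)
  case (1 t) then show ?case using hnf_body_lift_refl hnf.intros(1) by blast
next
  case (2 t)
  obtain p0 where p0: "p = Lam p0" "t = lift (Suc k) p0" using lift_inv_Lam[OF "2.prems"[symmetric]] by blast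
  then show ?case using "2.IH"[OF p0(2)] by (auto intro: hnf.intros)
qed

lemma head_beta_star_pre: "head x y \<Longrightarrow> has_hnf y \<Longrightarrow> has_hnf x"
  using has_hnf_beta_bwd head_beta by blast

lemma B_lift: "has_hnf (lift k p) \<Longrightarrow> has_hnf p"
proof -
  assume "has_hnf (lift k p)"
  then obtain h where h: "head\<^sup>*\<^sup>* (lift k p) h" "hnf h" unfolding has_hnf_head by blast
  have "\<forall>p. x = lift k p \<longrightarrow> has_hnf p" if "head\<^sup>*\<^sup>* x h" for x
    using that
  proof (induction rule: converse_rtranclp_induct)
    case base then show ?case using h(2) hnf_lift_refl hnf_has_hnf by blast
  next
    case (step x y)
    show ?case
    proof (intro allI impI)
      fix p assume "x = lift k p"
      then obtain p1 where "head p p1" "y = lift k p1" using head_lift_refl step(1) by blast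
      then show "has_hnf p" using step(3) head_beta_star_pre by blast
    qed
  qed
  then show ?thesis using h(1) by blast
qed

lemma subst_inv_App: "subst k u p = App a b \<Longrightarrow> (\<exists>n. p = Var n) \<or> (\<exists>p1 p2. p = App p1 p2 \<and> a = subst k u p1 \<and> b = subst k u p2)"
  by (cases p) auto

lemma subst_inv_Lam: "subst k u p = Lam a \<Longrightarrow> (\<exists>n. p = Var n) \<or> (\<exists>p0. p = Lam p0 \<and> a = subst (Suc k) u p0)"
  by (cases p) auto

lemma hnf_body_Var: "hnf_body (Var n)"
  by (rule hnf_body.intros) auto

lemma hnf_Var: "hnf (Var n)"
  by (rule hnf.intros) (rule hnf_body_Var)

lemma whead_subst_refl: "whead x y \<Longrightarrow> x = subst k u p \<Longrightarrow> hnf_body p \<or> (\<exists>p1. whead p p1 \<and> y = subst k u p1)"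
proof (induction arbitrary: p rule: whead.induct)
  case (1 s t)
  from subst_inv_App[OF "1"[symmetric]] show ?case
  proof
    assume "\<exists>n. p = Var n" then show ?thesis using hnf_body_Var by blast
  next
    assume "\<exists>p1 p2. p = App p1 p2 \<and> Lam s = subst k u p1 \<and> t = subst k u p2"
    then obtain p1 p2 where p: "p = App p1 p2" "Lam s = subst k u p1" "t = subst k u p2" by blast
    from subst_inv_Lam[OF p(2)[symmetric]] show ?thesis
    proof
      assume "\<exists>n. p1 = Var n" then show ?thesis using p hnf_body_Var hnf_body.intros(2) by blast
    next
      assume "\<exists>p0. p1 = Lam p0 \<and> s = subst (Suc k) u p0"
      then obtain p0 where p0: "p1 = Lam p0" "s = subst (Suc k) u p0" by blast
      have "subst 0 t s = subst k u (subst 0 p2 p0)" using subst_subst[of 0 k u p2 p0] p p0 by simp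
      then show ?thesis using p p0 by (auto intro: whead.intros)
    qed
  qed
next
  case (2 s s' t)
  from subst_inv_App[OF "2.prems"[symmetric]] show ?case
  proof
    assume "\<exists>n. p = Var n" then show ?thesis using hnf_body_Var by blast
  next
    assume "\<exists>p1 p2. p = App p1 p2 \<and> s = subst k u p1 \<and> t = subst k u p2"
    then obtain p1 p2 where p: "p = App p1 p2" "s = subst k u p1" "t = subst k u p2" by blast
    from "2.IH"[OF p(2)] show ?thesis
    proof
      assume "hnf_body p1" then show ?thesis using p hnf_body.intros(2) by blast
    next
      assume "\<exists>p1'. whead p1 p1' \<and> s' = subst k u p1'"
      then obtain q where "whead p1 q" "s' = subst k u q" by blast
      then show ?thesis using p by (auto intro: whead.intros)
    qed
  qed
qed

lemma head_subst_refl: "head x y \<Longrightarrow> x = subst k u p \<Longrightarrow> hnf p \<or> (\<exists>p1. head p p1 \<and> y = subst k u p1)"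
proof (induction arbitrary: k p rule: head.induct)
  case (1 s s')
  then show ?case using whead_subst_refl head.intros(1) hnf.intros(1) by blast
next
  case (2 s s')
  from subst_inv_Lam[OF "2.prems"[symmetric]] show ?case
  proof
    assume "\<exists>n. p = Var n" then show ?thesis using hnf_Var by blast
  next
    assume "\<exists>p0. p = Lam p0 \<and> s = subst (Suc k) u p0"
    then obtain p0 where p0: "p = Lam p0" "s = subst (Suc k) u p0" by blast
    from "2.IH"[OF p0(2)] show ?thesis
    proof
      assume "hnf p0" then show ?thesis using p0 hnf.intros(2) by blast
    next
      assume "\<exists>p1. head p0 p1 \<and> s' = subst (Suc k) u p1"
      then obtain q where "head p0 q" "s' = subst (Suc k) u q" by blast
      then show ?thesis using p0 by (auto intro: head.intros)
    qed
  qed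
qed

lemma hnf_body_subst_refl: "hnf_body x \<Longrightarrow> x = subst k u p \<Longrightarrow> hnf_body p"
proof (induction arbitrary: p rule: hnf_body.induct)
  case (1 a)
  then show ?case by (cases p) (auto intro: hnf_body.intros split: if_splits)
next
  case (2 s t)
  from subst_inv_App[OF "2.prems"[symmetric]] show ?case
  proof
    assume "\<exists>n. p = Var n" then show ?thesis using hnf_body_Var by blast
  next
    assume "\<exists>p1 p2. p = App p1 p2 \<and> s = subst k u p1 \<and> t = subst k u p2"
    then show ?thesis using "2.IH" hnf_body.intros(2) by blast
  qed
qed

lemma hnf_subst_refl: "hnf x \<Longrightarrow> x = subst k u p \<Longrightarrow> hnf p"
proof (induction arbitrary: k p rule: hnf.induct)
  case (1 t) then show ?case using hnf_body_subst_refl hnf.intros(1) by blast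
next
  case (2 t)
  from subst_inv_Lam[OF "2.prems"[symmetric]] show ?case
  proof
    assume "\<exists>n. p = Var n" then show ?thesis using hnf_Var by blast
  next
    assume "\<exists>p0. p = Lam p0 \<and> t = subst (Suc k) u p0"
    then show ?thesis using "2.IH" hnf.intros(2) by blast
  qed
qed

lemma B_subst: "has_hnf (subst k u p) \<Longrightarrow> has_hnf p"
proof -
  assume "has_hnf (subst k u p)"
  then obtain h where h: "head\<^sup>*\<^sup>* (subst k u p) h" "hnf h" unfolding has_hnf_head by blast
  have "\<forall>p. x = subst k u p \<longrightarrow> has_hnf p" if "head\<^sup>*\<^sup>* x h" for x
    using that
  proof (induction rule: converse_rtranclp_induct)
    case base then show ?case using h(2) hnf_subst_refl hnf_has_hnf by blast
  next
    case (step x y)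
    show ?case
    proof (intro allI impI)
      fix p assume "x = subst k u p"
      then have "hnf p \<or> (\<exists>p1. head p p1 \<and> y = subst k u p1)" using head_subst_refl step(1) by blast
      then show "has_hnf p" using step(3) head_beta_star_pre hnf_has_hnf by blast
    qed
  qed
  then show ?thesis using h(1) by blast
qed

lemma beta_star_lam: "beta\<^sup>*\<^sup>* a b \<Longrightarrow> beta\<^sup>*\<^sup>* (Lam a) (Lam b)"
  by (induction rule: rtranclp_induct) (auto intro: rtranclp.rtrancl_into_rtrancl beta.intros)

lemma has_hnf_Lam: "has_hnf p \<Longrightarrow> has_hnf (Lam p)"
  unfolding has_hnf_def using beta_star_lam hnf.intros(2) by blast

lemma head_star_Lam_inv: "head\<^sup>*\<^sup>* x h \<Longrightarrow> x = Lam p \<Longrightarrow> \<exists>h'. h = Lam h' \<and> head\<^sup>*\<^sup>* p h'"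
proof (induction arbitrary: p rule: converse_rtranclp_induct)
  case base then show ?case by blast
next
  case (step x y)
  obtain b where b: "y = Lam b" "head p b" using head_Lam_inv step(1) step(4) by blast
  then obtain h' where "h = Lam h'" "head\<^sup>*\<^sup>* b h'" using step(3) by blast
  moreover have "head\<^sup>*\<^sup>* p h'" using b(2) calculation(2) by (rule converse_rtranclp_into_rtranclp)
  ultimately show ?case by blast
qed

lemma hnf_Lam_inv: "hnf (Lam x) \<Longrightarrow> hnf x"
  by (erule hnf.cases) (auto elim: hnf_body.cases)

lemma has_hnf_Lam_inv: "has_hnf (Lam p) \<Longrightarrow> has_hnf p"
proof -
  assume "has_hnf (Lam p)"
  then obtain h where h: "head\<^sup>*\<^sup>* (Lam p) h" "hnf h" unfolding has_hnf_head by blast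
  obtain h' where "h = Lam h'" "head\<^sup>*\<^sup>* p h'" using head_star_Lam_inv[OF h(1)] by blast
  moreover have "hnf h'" using h(2) \<open>h = Lam h'\<close> hnf_Lam_inv by blast
  ultimately show ?thesis unfolding has_hnf_head by blast
qed

lemma has_hnf_App: "has_hnf (App a b) \<Longrightarrow> has_hnf a"
proof -
  assume "has_hnf (App a b)"
  then obtain h where h: "head\<^sup>*\<^sup>* (App a b) h" "hnf h" unfolding has_hnf_head by blast
  have "\<forall>a. x = App a b \<longrightarrow> has_hnf a" if "head\<^sup>*\<^sup>* x h" for x
    using that
  proof (induction rule: converse_rtranclp_induct)
    case base
    show ?case
    proof (intro allI impI)
      fix a assume "h = App a b"
      then have "hnf_body (App a b)" using h(2) by (auto elim: hnf.cases)
      then have "hnf_body a" by (auto elim: hnf_body.cases)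
      then show "has_hnf a" using hnf.intros(1) hnf_has_hnf by blast
    qed
  next
    case (step x y)
    show ?case
    proof (intro allI impI)
      fix a assume xa: "x = App a b"
      then have "whead (App a b) y" using step(1) head_nonLam by blast
      then show "has_hnf a"
      proof (cases rule: whead.cases)
        case (1 c)
        have "has_hnf y" using step(2) h(2) unfolding has_hnf_head by blast
        then show ?thesis using 1 B_subst has_hnf_Lam by blast
      next
        case (2 a')
        then show ?thesis using step(3) whead_beta has_hnf_beta_bwd by blast
      qed
    qed
  qed
  then show ?thesis using h(1) by blast
qed

lemma beta_Bot: "beta Bot x \<Longrightarrow> False"
  by (auto elim: beta.cases)

lemma beta_star_Bot: "beta\<^sup>*\<^sup>* x h \<Longrightarrow> x = Bot \<Longrightarrow> h = Bot"
proof (induction rule: converse_rtranclp_induct)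
  case base then show ?case by simp
next
  case (step x y) then show ?case using beta_Bot by metis
qed

lemma not_hnf_body_Bot: "\<not> hnf_body Bot"
proof
  assume "hnf_body (Bot :: 'c trm)"
  then show False by (cases rule: hnf_body.cases) auto
qed

lemma not_hnf_Bot: "\<not> hnf Bot"
proof
  assume "hnf (Bot :: 'c trm)"
  then show False by (cases rule: hnf.cases) (auto simp: not_hnf_body_Bot)
qed

lemma no_hnf_Bot: "\<not> has_hnf Bot"
  unfolding has_hnf_def using beta_star_Bot not_hnf_Bot by blast

definition NH :: "'c trm \<Rightarrow> bool" where "NH s \<longleftrightarrow> \<not> has_hnf s"

lemma okP_NH: "okP NH"
  unfolding okP_def NH_def
proof (intro conjI allI impI)
  show "\<not> has_hnf (Bot :: 'c trm)" by (rule no_hnf_Bot)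
next
  fix k and s :: "'c trm" assume "\<not> has_hnf s" then show "\<not> has_hnf (lift k s)" using B_lift by blast
next
  fix k u and s :: "'c trm" assume "\<not> has_hnf s" then show "\<not> has_hnf (subst k u s)" using B_subst by blast
next
  fix s s1 :: "'c trm" assume "whead s s1" "\<not> has_hnf s1" then show "\<not> has_hnf s" using has_hnf_whead_fwd by blast
qed

lemma whead_star_step: "whead t t1 \<Longrightarrow> whead\<^sup>*\<^sup>* t x \<Longrightarrow> x = t \<or> whead\<^sup>*\<^sup>* t1 x"
  by (erule converse_rtranclpE) (auto dest: whead_det)

lemma nf_star: "(\<And>y. \<not> whead x y) \<Longrightarrow> whead\<^sup>*\<^sup>* x z \<Longrightarrow> z = x"
  by (erule converse_rtranclpE) auto

lemma SL_nonempty: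
  assumes w: "whead t t1" and h: "infg NH t t'" and hh: "has_hnf t1"
  shows "infg NH t1 t' \<or> (\<exists>u1 u2 u1' u2'. t = App u1 u2 \<and> t' = App u1' u2' \<and> infg NH u1 u1' \<and> infg NH u2 u2')"
  using h
proof (cases rule: infg.cases)
  case g_bot
  then show ?thesis using hh w has_hnf_beta_bwd whead_beta unfolding NH_def by blast
next
  case g_atom
  have "t' \<noteq> t" using g_atom w no_whead_atom by blast
  then have "whead\<^sup>*\<^sup>* t1 t'" using whead_star_step[OF w g_atom(3)] by blast
  then show ?thesis using g_atom by (auto intro: infg.intros)
next
  case (g_app u1 u2 u1' u2')
  from whead_star_step[OF w g_app(2)] show ?thesis
  proof
    assume "App u1 u2 = t" then show ?thesis using g_app by blast
  next
    assume "whead\<^sup>*\<^sup>* t1 (App u1 u2)" then show ?thesis using g_app by (auto intro: infg.intros)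
  qed
next
  case (g_lam r r')
  have "t \<noteq> Lam r" using w by auto
  then have "whead\<^sup>*\<^sup>* t1 (Lam r)" using whead_star_step[OF w g_lam(2)] by blast
  then show ?thesis using g_lam by (auto intro: infg.intros)
qed

lemma SLw: "whead t t1 \<Longrightarrow> infg NH t t' \<Longrightarrow> has_hnf t1 \<Longrightarrow>
  infg NH t1 t' \<or> (\<exists>t1'. whead t' t1' \<and> infg NH t1 t1')"
proof (induction arbitrary: t' rule: whead.induct)
  case (1 p q)
  from SL_nonempty[OF whead.intros(1) 1(1,2)] show ?case
  proof
    assume "infg NH (subst 0 q p) t'" then show ?thesis by blast
  next
    assume "\<exists>u1 u2 u1' u2'. App (Lam p) q = App u1 u2 \<and> t' = App u1' u2' \<and> infg NH u1 u1' \<and> infg NH u2 u2'"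
    then obtain u1' u2' where t': "t' = App u1' u2'" "infg NH (Lam p) u1'" "infg NH q u2'" by blast
    from t'(2) show ?thesis
    proof (cases rule: infg.cases)
      case g_bot
      then have "\<not> has_hnf p" using has_hnf_Lam unfolding NH_def by blast
      then show ?thesis using 1(2) B_subst by blast
    next
      case g_atom then show ?thesis using whead_star_Lam by force
    next
      case (g_app v1 v2) then show ?thesis using whead_star_Lam by force
    next
      case (g_lam r r')
      then have "r = p" using whead_star_Lam by force
      have "whead t' (subst 0 u2' r')" using t'(1) g_lam by (auto intro: whead.intros)
      moreover have "infg NH (subst 0 q p) (subst 0 u2' r')"
        using infg_subst[OF okP_NH] g_lam(3) \<open>r = p\<close> t'(3) by blast
      ultimately show ?thesis by blast
    qed
  qed
next
  case (2 s s' u)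
  from SL_nonempty[OF whead.intros(2)[OF 2(1)] 2(3,4)] show ?case
  proof
    assume "infg NH (App s' u) t'" then show ?thesis by blast
  next
    assume "\<exists>u1 u2 u1' u2'. App s u = App u1 u2 \<and> t' = App u1' u2' \<and> infg NH u1 u1' \<and> infg NH u2 u2'"
    then obtain u1' u2' where t': "t' = App u1' u2'" "infg NH s u1'" "infg NH u u2'" by blast
    have "has_hnf s'" using 2(4) has_hnf_App by blast
    from "2.IH"[OF t'(2) this] show ?thesis
    proof
      assume "infg NH s' u1'"
      then have "infg NH (App s' u) t'" using t' by (auto intro: infg.intros)
      then show ?thesis by blast
    next
      assume "\<exists>t1'. whead u1' t1' \<and> infg NH s' t1'"
      then obtain w where "whead u1' w" "infg NH s' w" by blast
      then have "whead t' (App w u2')" "infg NH (App s' u) (App w u2')"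
        using t' by (auto intro: infg.intros whead.intros)
      then show ?thesis by blast
    qed
  qed
qed

lemma SLh: "head t t1 \<Longrightarrow> infg NH t t' \<Longrightarrow> has_hnf t1 \<Longrightarrow>
  infg NH t1 t' \<or> (\<exists>t1'. head t' t1' \<and> infg NH t1 t1')"
proof (induction arbitrary: t' rule: head.induct)
  case (1 s s')
  then show ?case using SLw head.intros(1) by blast
next
  case (2 s s')
  from 2(3) show ?case
  proof (cases rule: infg.cases)
    case g_bot
    have "has_hnf (Lam s)" using 2(4) has_hnf_beta_bwd head_beta head.intros(2)[OF 2(1)] by blast
    then show ?thesis using g_bot unfolding NH_def by blast
  next
    case g_atom then show ?thesis using whead_star_Lam by force
  next
    case (g_app v1 v2) then show ?thesis using whead_star_Lam by force
  next
    case (g_lam r r')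
    then have "r = s" using whead_star_Lam by force
    have "has_hnf s'" using 2(4) has_hnf_Lam_inv by blast
    from "2.IH"[OF g_lam(3)[unfolded \<open>r = s\<close>] this] show ?thesis
    proof
      assume "infg NH s' r'"
      then show ?thesis using g_lam by (auto intro: infg.intros)
    next
      assume "\<exists>t1'. head r' t1' \<and> infg NH s' t1'"
      then obtain w where "head r' w" "infg NH s' w" by blast
      then have "head t' (Lam w)" "infg NH (Lam s') (Lam w)"
        using g_lam by (auto intro: infg.intros head.intros)
      then show ?thesis by blast
    qed
  qed
qed

lemma hnf_body_infg: "hnf_body t \<Longrightarrow> infg NH t t' \<Longrightarrow> hnf_body t'"
proof (induction arbitrary: t' rule: hnf_body.induct)
  case (1 a)
  have hh: "has_hnf a" using 1 hnf_has_hnf hnf.intros(1) hnf_body.intros(1) by blast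
  from 1(3) show ?case
  proof (cases rule: infg.cases)
    case g_bot then show ?thesis using hh unfolding NH_def by blast
  next
    case g_atom then show ?thesis using whead_star_atom 1 hnf_body.intros(1) by blast
  next
    case (g_app u1 u2) then show ?thesis using whead_star_atom 1 by force
  next
    case (g_lam r) then show ?thesis using whead_star_atom 1 by force
  qed
next
  case (2 s u)
  have hb: "hnf_body (App s u)" using 2(1) hnf_body.intros(2) by blast
  have nw: "\<And>y. \<not> whead (App s u) y" using hnf_body_no_whead[OF hb] by blast
  from 2(3) show ?case
  proof (cases rule: infg.cases)
    case g_bot then show ?thesis using hb hnf_has_hnf hnf.intros(1) unfolding NH_def by blast
  next
    case g_atom then show ?thesis using nf_star[OF nw] by force
  next
    case (g_app u1 u2 u1' u2')
    then have "u1 = s" using nf_star[OF nw] by force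
    then show ?thesis using "2.IH" g_app hnf_body.intros(2) by blast
  next
    case (g_lam r) then show ?thesis using nf_star[OF nw] by force
  qed
qed

lemma hnf_infg: "hnf t \<Longrightarrow> infg NH t t' \<Longrightarrow> hnf t'"
proof (induction arbitrary: t' rule: hnf.induct)
  case (1 t) then show ?case using hnf_body_infg hnf.intros(1) by blast
next
  case (2 t)
  have hh: "has_hnf (Lam t)" using 2(1) hnf.intros(2) hnf_has_hnf by blast
  from 2(3) show ?case
  proof (cases rule: infg.cases)
    case g_bot then show ?thesis using hh unfolding NH_def by blast
  next
    case g_atom then show ?thesis using whead_star_Lam by force
  next
    case (g_app v1 v2) then show ?thesis using whead_star_Lam by force
  next
    case (g_lam r r')
    then have "r = t" using whead_star_Lam by force
    then show ?thesis using "2.IH" g_lam hnf.intros(2) by blast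
  qed
qed

lemma M2: "has_hnf t \<Longrightarrow> infg NH t t' \<Longrightarrow> has_hnf t'"
proof -
  assume "has_hnf t" "infg NH t t'"
  then obtain h where h: "head\<^sup>*\<^sup>* t h" "hnf h" unfolding has_hnf_head by blast
  have "\<forall>t'. infg NH x t' \<longrightarrow> has_hnf t'" if "head\<^sup>*\<^sup>* x h" for x
    using that
  proof (induction rule: converse_rtranclp_induct)
    case base then show ?case using h(2) hnf_infg hnf_has_hnf by blast
  next
    case (step x y)
    have hy: "has_hnf y" using step(2) h(2) unfolding has_hnf_head by blast
    show ?case
    proof (intro allI impI)
      fix t' assume "infg NH x t'"
      from SLh[OF step(1) this hy] show "has_hnf t'"
        using step(3) has_hnf_beta_bwd head_beta by blast
    qed
  qed
  then show ?thesis using h(1) \<open>infg NH t t'\<close> by blast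
qed

lemma M:
  assumes "infg NH t t'" "head\<^sup>*\<^sup>* t' (lams n (apps a us))" "is_atom a" "a \<noteq> Bot"
  shows "\<exists>ws. head\<^sup>*\<^sup>* t (lams n (apps a ws)) \<and> list_all2 (infg NH) ws us"
proof -
  have "infg NH t (lams n (apps a us))"
    using infg_append_star[OF okP_NH head_star_beta_star[OF assms(2)] assms(1)] .
  then show ?thesis using infg_lams[OF okP_NH assms(3,4)] by blast
qed

lemma append_bb: "bb t u \<Longrightarrow> infg NH s t \<Longrightarrow> infg NH s u"
proof (induction arbitrary: s rule: bb.induct)
  case (bb_redex p q)
  then show ?case using infg_append[OF okP_NH] beta.intros(1) by blast
next
  case (bb_bot t)
  then have "\<not> has_hnf s" using M2 by blast
  then show ?case by (auto intro: infg.intros simp: NH_def)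
next
  case (bb_app1 t1 t1' t2)
  from bb_app1(3) show ?case
    by (cases rule: infg.cases) (auto intro: infg.intros bb_app1.IH)
next
  case (bb_app2 t2 t2' t1)
  from bb_app2(3) show ?case
    by (cases rule: infg.cases) (auto intro: infg.intros bb_app2.IH)
next
  case (bb_lam t1 t1')
  from bb_lam(3) show ?case
    by (cases rule: infg.cases) (auto intro: infg.intros bb_lam.IH)
qed

lemma append_bb_star: "bb\<^sup>*\<^sup>* t u \<Longrightarrow> infg NH s t \<Longrightarrow> infg NH s u"
  by (induction rule: rtranclp_induct) (auto intro: append_bb)

lemma infbb_infg:
  assumes "inf_bb t t'"
  shows "infg NH t t'"
proof -
  have "\<exists>v0. infg NH t v0 \<and> inf_bb v0 t'" using assms infg_refl[OF okP_NH] by blast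
  then show ?thesis
  proof (coinduction arbitrary: t t' rule: infg.coinduct)
    case (infg s v)
    then obtain v0 where v0: "infg NH s v0" "inf_bb v0 v" by blast
    from v0(2) show ?case
    proof (cases rule: inf_bb.cases)
      case inf_atom
      then have "infg NH s v" using append_bb_star v0(1) by blast
      then show ?thesis by (cases rule: infg.cases) auto
    next
      case (inf_app u1 u2 u1' u2')
      then have "infg NH s (App u1 u2)" using append_bb_star v0(1) by blast
      then show ?thesis
      proof (cases rule: infg.cases)
        case (g_app w1 w2)
        then show ?thesis using inf_app by blast
      qed simp_all
    next
      case (inf_lam r r')
      then have "infg NH s (Lam r)" using append_bb_star v0(1) by blast
      then show ?thesis
      proof (cases rule: infg.cases)
        case (g_lam w)
        then show ?thesis using inf_lam by blast
      qed simp_all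
    qed
  qed
qed

theorem lemma5p39:
  fixes t t' s :: "'c trm"
  assumes "inf_bb t t'"
    and "infN t' s"
  shows "infN t s"
proof -
  have "\<exists>t'. infg NH t t' \<and> infN t' s" using assms infbb_infg by blast
  then show ?thesis
  proof (coinduction arbitrary: t s rule: infN.coinduct)
    case (infN t s)
    then obtain t' where h: "infg NH t t'" "infN t' s" by blast
    from h(2) show ?case
    proof (cases rule: infN.cases)
      case infN_bot
      then show ?thesis using M2 h(1) by blast
    next
      case (infN_hnf a ts ts' n)
      obtain ws where ws: "head\<^sup>*\<^sup>* t (lams n (apps a ws))" "list_all2 (infg NH) ws ts"
        using M[OF h(1) infN_hnf(5,2,3)] by blast
      have len: "length ws = length ts" using ws(2) list_all2_lengthD by blast
      have X: "\<forall>i<length ws. (\<exists>t s. ws ! i = t \<and> ts' ! i = s \<and> (\<exists>t'. infg NH t t' \<and> infN t' s)) \<or> infN (ws ! i) (ts' ! i)"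
      proof (intro allI impI disjI1)
        fix i assume i: "i < length ws"
        then have "infg NH (ws!i) (ts!i)" using ws(2) list_all2_nthD by blast
        moreover have "infN (ts!i) (ts'!i)" using infN_hnf(6) len i by simp
        ultimately show "\<exists>t s. ws ! i = t \<and> ts' ! i = s \<and> (\<exists>t'. infg NH t t' \<and> infN t' s)" by blast
      qed
      have len2: "length ws = length ts'" using len infN_hnf(4) by simp
      show ?thesis
        apply (rule disjI2)
        apply (rule exI[of _ a], rule exI[of _ ws], rule exI[of _ ts'], rule exI[of _ t], rule exI[of _ n])
        apply (intro conjI)
              apply (simp_all only: infN_hnf(1,2,3) ws(1) len2[symmetric] refl simp_thms)
        apply (rule X)
        done
    qed
  qed
qed

end
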